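(* For $i=1,2$ let $P_i$ be an irreducible aperiodic transition matrix on the countable set $X_i$ with root $e_i$ satisfying a ratio limit theorem with kernel $h_i$ and ratio limit kernel $H_i(x_i,y_i)=h_i(x_i,y_i)/h_i(e_i,y_i)$; let $\partial_R X_i$ be the ratio limit boundary of $(X_i,P_i)$ and denote also by $H_i(x_i,\cdot)$ the continuous extensions to $\partial_R X_i$. Let $P=P_1\otimes P_2$ on $X=X_1\times X_2$, $p(x_1x_2,y_1y_2)=p_1(x_1,y_1)p_2(x_2,y_2)$, which satisfies a ratio limit theorem with $h(x_1x_2,y_1y_2)=h_1(x_1,y_1)h_2(x_2,y_2)$ and $H(x_1x_2,y_1y_2)=H_1(x_1,y_1)H_2(x_2,y_2)$. On the product boundary $B=(\partial_R X_1\times\partial_R X_2)\cup(X_1\times\partial_R X_2)\cup(\partial_R X_1\times X_2)$ define $\eta_1\eta_2\approx\zeta_1\zeta_2$ iff $H_1(x_1,\eta_1)H_2(x_2,\eta_2)=H_1(x_1,\zeta_1)H_2(x_2,\zeta_2)$ for all $x_1x_2\in X_1\times X_2$ (where $H_i(x_i,y_i)$ for $y_i\in X_i$ is the original kernel). Then the ratio limit boundary of $(X,P)$ is the image of the product boundary $B$ (inside the product compactification of the two ratio limit compactifications) under the factor map of $\approx$, and the extension of $H(x_1x_2,\cdot)$ to it is $H(x_1x_2,\xi)=H_1(x_1,\eta_1)H_2(x_2,\eta_2)$ for any representative $\eta_1\eta_2$ of the class $\xi$.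
   Context: Ratio limit theorem for an irreducible aperiodic transition matrix $P$ on a countable set $X$ with root $e$: $h(x,y)=\lim_n p^{(n)}(x,y)/p^{(n)}(e,e)\in(0,\infty)$ exists for all $x,y$; ratio limit kernel $H(x,y)=h(x,y)/h(e,y)$. The ratio limit compactification is the unique (up to homeomorphism fixing $X$) compact Hausdorff space containing $X$ as discrete open dense subset to which every $H(x,\cdot)$ extends continuously and whose boundary points (points outside $X$, forming the ratio limit boundary) are separated by these extensions. Product compactification of compactifications $\mathcal C(X_1),\mathcal C(X_2)$ with boundaries $\partial X_i$: the space $\mathcal C(X_1)\times\mathcal C(X_2)$ with product topology; its boundary is $(\partial X_1\times\partial X_2)\cup(X_1\times\partial X_2)\cup(\partial X_1\times X_2)$; elements are written $w_1w_2$. *)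

theory Defs
  imports "HOL-Analysis.Analysis"
begin

definition transition_matrix :: "('a \<Rightarrow> 'a \<Rightarrow> real) \<Rightarrow> bool" where
  "transition_matrix P \<longleftrightarrow> (\<forall>x y. 0 \<le> P x y) \<and> (\<forall>x. ((\<lambda>y. P x y) has_sum 1) UNIV)"

fun mpow :: "('a \<Rightarrow> 'a \<Rightarrow> real) \<Rightarrow> nat \<Rightarrow> 'a \<Rightarrow> 'a \<Rightarrow> real" where
  "mpow P 0 x y = (if x = y then 1 else 0)"
| "mpow P (Suc n) x y = (\<Sum>\<^sub>\<infinity>z. P x z * mpow P n z y)"

definition irreducible_mc :: "('a \<Rightarrow> 'a \<Rightarrow> real) \<Rightarrow> bool" where
  "irreducible_mc P \<longleftrightarrow> (\<forall>x y. \<exists>n. 0 < mpow P n x y)"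

definition aperiodic_mc :: "('a \<Rightarrow> 'a \<Rightarrow> real) \<Rightarrow> 'a \<Rightarrow> bool" where
  "aperiodic_mc P e \<longleftrightarrow> Gcd {n. 0 < mpow P n e e} = 1"

definition ratio_limit_thm :: "('a \<Rightarrow> 'a \<Rightarrow> real) \<Rightarrow> 'a \<Rightarrow> ('a \<Rightarrow> 'a \<Rightarrow> real) \<Rightarrow> bool" where
  "ratio_limit_thm P e h \<longleftrightarrow>
     (\<forall>x y. 0 < h x y \<and> ((\<lambda>n. mpow P n x y / mpow P n e e) \<longlongrightarrow> h x y) sequentially)"

definition rl_kernel :: "('a \<Rightarrow> 'a \<Rightarrow> real) \<Rightarrow> 'a \<Rightarrow> 'a \<Rightarrow> 'a \<Rightarrow> real" where
  "rl_kernel P e x y = lim (\<lambda>n. mpow P n x y / mpow P n e e) / lim (\<lambda>n. mpow P n e y / mpow P n e e)"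

text \<open>(T, iota, G) is a ratio limit compactification of (X,P) with root e:
  T compact Hausdorff, iota embeds X as a discrete open dense subset, G x is the
  continuous extension of H(x,.), and the G x separate boundary points.\<close>
definition rl_compactification ::
  "('a \<Rightarrow> 'a \<Rightarrow> real) \<Rightarrow> 'a \<Rightarrow> 't topology \<Rightarrow> ('a \<Rightarrow> 't) \<Rightarrow> ('a \<Rightarrow> 't \<Rightarrow> real) \<Rightarrow> bool" where
  "rl_compactification P e T \<iota> G \<longleftrightarrow>
     compact_space T \<and> Hausdorff_space T \<and>
     inj \<iota> \<and> range \<iota> \<subseteq> topspace T \<and>
     (\<forall>x. openin T {\<iota> x}) \<and>
     T closure_of (range \<iota>) = topspace T \<and>
     (\<forall>x. continuous_map T euclideanreal (G x)) \<and>
     (\<forall>x y. G x (\<iota> y) = rl_kernel P e x y) \<and>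
     (\<forall>a\<in>topspace T - range \<iota>. \<forall>b\<in>topspace T - range \<iota>. a \<noteq> b \<longrightarrow> (\<exists>x. G x a \<noteq> G x b))"

definition prod_matrix :: "('a \<Rightarrow> 'a \<Rightarrow> real) \<Rightarrow> ('b \<Rightarrow> 'b \<Rightarrow> real) \<Rightarrow> ('a \<times> 'b) \<Rightarrow> ('a \<times> 'b) \<Rightarrow> real" where
  "prod_matrix P1 P2 x y = P1 (fst x) (fst y) * P2 (snd x) (snd y)"

text \<open>Quotient topology on the set of equivalence classes; the factor map is z \<mapsto> R``{z}.\<close>
definition quotient_topology :: "'a topology \<Rightarrow> ('a \<times> 'a) set \<Rightarrow> 'a set topology" where
  "quotient_topology T R = topology (\<lambda>U. U \<subseteq> topspace T // R \<and> openin T (\<Union>U))"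

definition prod_bdry_rel ::
  "'s topology \<Rightarrow> 't topology \<Rightarrow> ('a \<Rightarrow> 's) \<Rightarrow> ('b \<Rightarrow> 't) \<Rightarrow> ('a \<Rightarrow> 's \<Rightarrow> real) \<Rightarrow> ('b \<Rightarrow> 't \<Rightarrow> real)
   \<Rightarrow> (('s \<times> 't) \<times> ('s \<times> 't)) set" where
  "prod_bdry_rel T1 T2 \<iota>1 \<iota>2 G1 G2 =
     (let C = topspace T1 \<times> topspace T2; B = C - (range \<iota>1 \<times> range \<iota>2) in
      {(a, b). a \<in> C \<and> b \<in> C \<and>
        (a = b \<or> (a \<in> B \<and> b \<in> B \<and>
          (\<forall>x1 x2. G1 x1 (fst a) * G2 x2 (snd a) = G1 x1 (fst b) * G2 x2 (snd b))))})"

end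

theory Submission
  imports Defs
begin


lemma mpow_bounds:
  assumes "transition_matrix P"
  shows "0 \<le> mpow P n x y \<and> mpow P n x y \<le> 1"
proof (induction n arbitrary: x)
  case 0 then show ?case by simp
next
  case (Suc n)
  have P0: "\<And>z. 0 \<le> P x z" and Ps: "((\<lambda>z. P x z) has_sum 1) UNIV"
    using assms unfolding transition_matrix_def by auto
  have sP: "(\<lambda>z. P x z) summable_on UNIV" using Ps by (auto simp: summable_on_def)
  have sm: "(\<lambda>z. P x z * mpow P n z y) summable_on UNIV"
    by (rule summable_on_comparison_test[OF sP]) (use Suc P0 in \<open>auto intro: mult_left_le\<close>)
  have "(\<Sum>\<^sub>\<infinity>z. P x z * mpow P n z y) \<le> (\<Sum>\<^sub>\<infinity>z. P x z)"
    by (rule infsum_mono[OF sm sP]) (use Suc P0 in \<open>auto intro: mult_left_le\<close>)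
  also have "\<dots> = 1" using Ps by (simp add: infsumI)
  finally show ?case using Suc P0 by (auto intro!: infsum_nonneg)
qed

lemma has_sum_prod_mult:
  fixes a :: "'a \<Rightarrow> real" and b :: "'b \<Rightarrow> real"
  assumes "(a has_sum A) UNIV" "(b has_sum B) UNIV" "\<And>z. 0 \<le> a z" "\<And>z. 0 \<le> b z"
  shows "((\<lambda>z. a (fst z) * b (snd z)) has_sum (A * B)) UNIV"
proof -
  have f: "((\<lambda>z2. a z1 * b z2) has_sum a z1 * B) UNIV" for z1
    using assms(2) by (rule has_sum_cmult_right)
  have g: "((\<lambda>z1. a z1 * B) has_sum A * B) UNIV"
    using assms(1) by (rule has_sum_cmult_left)
  have "(\<lambda>z. a (fst z) * b (snd z)) summable_on Sigma UNIV (\<lambda>_. UNIV)"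
    by (rule summable_on_SigmaI[where g="\<lambda>z1. a z1 * B"]) (use f g assms in \<open>auto simp: summable_on_def\<close>)
  then have "((\<lambda>z. a (fst z) * b (snd z)) has_sum (A * B)) (Sigma UNIV (\<lambda>_. UNIV))"
    by (intro has_sum_SigmaI[where g="\<lambda>z1. a z1 * B"]) (use f g in auto)
  then show ?thesis by simp
qed

lemma mpow_prod:
  assumes "transition_matrix P1" "transition_matrix P2"
  shows "mpow (prod_matrix P1 P2) n x y = mpow P1 n (fst x) (fst y) * mpow P2 n (snd x) (snd y)"
proof (induction n arbitrary: x)
  case 0 then show ?case by (cases x; cases y) auto
next
  case (Suc n)
  define a where "a = (\<lambda>z1. P1 (fst x) z1 * mpow P1 n z1 (fst y))"
  define b where "b = (\<lambda>z2. P2 (snd x) z2 * mpow P2 n z2 (snd y))"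
  have ha: "(a has_sum mpow P1 (Suc n) (fst x) (fst y)) UNIV"
  proof -
    have P0: "\<And>z. 0 \<le> P1 (fst x) z" and Ps: "((\<lambda>z. P1 (fst x) z) has_sum 1) UNIV"
      using assms unfolding transition_matrix_def by auto
    have sP: "(\<lambda>z. P1 (fst x) z) summable_on UNIV" using Ps by (auto simp: summable_on_def)
    have "a summable_on UNIV" unfolding a_def
      by (rule summable_on_comparison_test[OF sP]) (use mpow_bounds[OF assms(1)] P0 in \<open>auto intro: mult_left_le\<close>)
    then have "(a has_sum infsum a UNIV) UNIV" by (rule has_sum_infsum)
    then show ?thesis by (simp add: a_def)
  qed
  have hb: "(b has_sum mpow P2 (Suc n) (snd x) (snd y)) UNIV"
  proof -
    have P0: "\<And>z. 0 \<le> P2 (snd x) z" and Ps: "((\<lambda>z. P2 (snd x) z) has_sum 1) UNIV"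
      using assms unfolding transition_matrix_def by auto
    have sP: "(\<lambda>z. P2 (snd x) z) summable_on UNIV" using Ps by (auto simp: summable_on_def)
    have "b summable_on UNIV" unfolding b_def
      by (rule summable_on_comparison_test[OF sP]) (use mpow_bounds[OF assms(2)] P0 in \<open>auto intro: mult_left_le\<close>)
    then have "(b has_sum infsum b UNIV) UNIV" by (rule has_sum_infsum)
    then show ?thesis by (simp add: b_def)
  qed
  have "((\<lambda>z. a (fst z) * b (snd z)) has_sum (mpow P1 (Suc n) (fst x) (fst y) * mpow P2 (Suc n) (snd x) (snd y))) UNIV"
    by (rule has_sum_prod_mult[OF ha hb]) (use assms mpow_bounds[OF assms(1)] mpow_bounds[OF assms(2)] in \<open>auto simp: a_def b_def transition_matrix_def\<close>)
  moreover have "(\<lambda>z. prod_matrix P1 P2 x z * mpow (prod_matrix P1 P2) n z y) = (\<lambda>z. a (fst z) * b (snd z))"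
    by (auto simp: Suc a_def b_def prod_matrix_def)
  ultimately show ?case by (simp add: infsumI)
qed



lemma qt_openin:
  assumes eq: "equiv (topspace T) R"
  shows "openin (quotient_topology T R) U \<longleftrightarrow> U \<subseteq> topspace T // R \<and> openin T (\<Union>U)"
proof -
  have i: "\<forall>S V. S \<subseteq> topspace T // R \<and> openin T (\<Union>S) \<longrightarrow> V \<subseteq> topspace T // R \<and> openin T (\<Union>V) \<longrightarrow> S \<inter> V \<subseteq> topspace T // R \<and> openin T (\<Union>(S \<inter> V))"
  proof (intro allI impI)
    fix S V assume S: "S \<subseteq> topspace T // R \<and> openin T (\<Union>S)" and V: "V \<subseteq> topspace T // R \<and> openin T (\<Union>V)"
    have "\<Union>(S \<inter> V) = \<Union>S \<inter> \<Union>V"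
    proof
      show "\<Union>S \<inter> \<Union>V \<subseteq> \<Union>(S \<inter> V)"
      proof
        fix x assume "x \<in> \<Union>S \<inter> \<Union>V"
        then obtain A B where "A \<in> S" "B \<in> V" "x \<in> A" "x \<in> B" by auto
        then have "A = B" using quotient_disj[OF eq, of A B] S V by auto
        then show "x \<in> \<Union>(S \<inter> V)" using \<open>A \<in> S\<close> \<open>B \<in> V\<close> \<open>x \<in> A\<close> by auto
      qed
    qed auto
    then show "S \<inter> V \<subseteq> topspace T // R \<and> openin T (\<Union>(S \<inter> V))" using S V by auto
  qed
  have u: "\<forall>K. (\<forall>S\<in>K. S \<subseteq> topspace T // R \<and> openin T (\<Union>S)) \<longrightarrow> \<Union>K \<subseteq> topspace T // R \<and> openin T (\<Union>(\<Union>K))"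
  proof (intro allI impI)
    fix K assume K: "\<forall>S\<in>K. S \<subseteq> topspace T // R \<and> openin T (\<Union>S)"
    have "\<Union>(\<Union>K) = \<Union>((\<lambda>S. \<Union>S) ` K)" by auto
    then show "\<Union>K \<subseteq> topspace T // R \<and> openin T (\<Union>(\<Union>K))" using K by auto
  qed
  have "istopology (\<lambda>U. U \<subseteq> topspace T // R \<and> openin T (\<Union>U))"
    unfolding istopology_def using i u by blast
  then show ?thesis unfolding quotient_topology_def by simp
qed

lemma qt_topspace:
  assumes eq: "equiv (topspace T) R"
  shows "topspace (quotient_topology T R) = topspace T // R"
proof -
  have "openin (quotient_topology T R) (topspace T // R)"
    using qt_openin[OF eq] Union_quotient[OF eq] by simp
  then have "topspace T // R \<subseteq> topspace (quotient_topology T R)" by (rule openin_subset)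
  moreover have "topspace (quotient_topology T R) \<subseteq> topspace T // R"
    using qt_openin[OF eq] by (metis openin_topspace)
  ultimately show ?thesis by blast
qed

lemma qt_quotient_map:
  assumes eq: "equiv (topspace T) R"
  shows "quotient_map T (quotient_topology T R) (\<lambda>z. R``{z})"
  unfolding quotient_map_def qt_topspace[OF eq]
proof (intro conjI allI impI)
  show "(\<lambda>z. R``{z}) ` topspace T = topspace T // R" by (auto simp: quotient_def)
next
  fix U assume U: "U \<subseteq> topspace T // R"
  have "{x \<in> topspace T. R``{x} \<in> U} = \<Union>U"
  proof
    show "{x \<in> topspace T. R``{x} \<in> U} \<subseteq> \<Union>U" using equiv_class_self[OF eq] by blast
    show "\<Union>U \<subseteq> {x \<in> topspace T. R``{x} \<in> U}"
    proof
      fix x assume "x \<in> \<Union>U"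
      then obtain A where A: "A \<in> U" "x \<in> A" by auto
      then obtain y where y: "A = R``{y}" "y \<in> topspace T" using U by (auto elim: quotientE)
      then have "(y, x) \<in> R" using A by auto
      then have "R``{x} = R``{y}" "x \<in> topspace T" using equiv_class_eq_iff[OF eq] by auto
      then show "x \<in> {x \<in> topspace T. R``{x} \<in> U}" using A y by auto
    qed
  qed
  then show "openin T {x \<in> topspace T. R``{x} \<in> U} = openin (quotient_topology T R) U"
    using qt_openin[OF eq] U by simp
qed



lemma rl_kernel_eq:
  assumes "ratio_limit_thm P e h"
  shows "rl_kernel P e x y = h x y / h e y"
proof -
  have "lim (\<lambda>n. mpow P n a b / mpow P n e e) = h a b" for a b
    using assms unfolding ratio_limit_thm_def by (blast intro: limI)
  then show ?thesis unfolding rl_kernel_def by simp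
qed

lemma main:
  fixes P1 :: "'a::countable \<Rightarrow> 'a \<Rightarrow> real" and e1 :: 'a and h1 :: "'a \<Rightarrow> 'a \<Rightarrow> real"
    and P2 :: "'b::countable \<Rightarrow> 'b \<Rightarrow> real" and e2 :: 'b and h2 :: "'b \<Rightarrow> 'b \<Rightarrow> real"
    and T1 :: "'s topology" and \<iota>1 :: "'a \<Rightarrow> 's" and G1 :: "'a \<Rightarrow> 's \<Rightarrow> real"
    and T2 :: "'t topology" and \<iota>2 :: "'b \<Rightarrow> 't" and G2 :: "'b \<Rightarrow> 't \<Rightarrow> real"
  assumes tm1: "transition_matrix P1" and rl1: "ratio_limit_thm P1 e1 h1"
    and tm2: "transition_matrix P2" and rl2: "ratio_limit_thm P2 e2 h2"
    and c1: "rl_compactification P1 e1 T1 \<iota>1 G1"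
    and c2: "rl_compactification P2 e2 T2 \<iota>2 G2"
    and R_def: "R = prod_bdry_rel T1 T2 \<iota>1 \<iota>2 G1 G2"
    and Q_def: "Q = quotient_topology (prod_topology T1 T2) R"
    and q_def: "q = (\<lambda>z. R `` {z})"
    and \<iota>_def: "\<iota> = (\<lambda>x. q (\<iota>1 (fst x), \<iota>2 (snd x)))"
    and B_def: "B = topspace T1 \<times> topspace T2 - (range \<iota>1 \<times> range \<iota>2)"
  shows "ratio_limit_thm (prod_matrix P1 P2) (e1,e2) (\<lambda>x y. h1 (fst x) (fst y) * h2 (snd x) (snd y)) \<and>
            topspace Q - range \<iota> = q ` B \<and>
            (\<exists>G. rl_compactification (prod_matrix P1 P2) (e1,e2) Q \<iota> G \<and>
                 (\<forall>x \<xi>. \<xi> \<in> B \<longrightarrow> G x (q \<xi>) = G1 (fst x) (fst \<xi>) * G2 (snd x) (snd \<xi>)))"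
proof -
  define C where "C = topspace T1 \<times> topspace T2"
  define I where "I = range \<iota>1 \<times> range \<iota>2"
  define F where "F = (\<lambda>(x::'a\<times>'b) (z::'s\<times>'t). G1 (fst x) (fst z) * G2 (snd x) (snd z))"
  let ?T = "prod_topology T1 T2"
  have topT: "topspace ?T = C" by (simp add: C_def)
  have c1': "compact_space T1" "Hausdorff_space T1" "inj \<iota>1" "range \<iota>1 \<subseteq> topspace T1"
      "\<And>x. openin T1 {\<iota>1 x}" "T1 closure_of (range \<iota>1) = topspace T1"
      "\<And>x. continuous_map T1 euclideanreal (G1 x)" "\<And>x y. G1 x (\<iota>1 y) = rl_kernel P1 e1 x y"
    using c1 unfolding rl_compactification_def by auto
  have c2': "compact_space T2" "Hausdorff_space T2" "inj \<iota>2" "range \<iota>2 \<subseteq> topspace T2"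
      "\<And>x. openin T2 {\<iota>2 x}" "T2 closure_of (range \<iota>2) = topspace T2"
      "\<And>x. continuous_map T2 euclideanreal (G2 x)" "\<And>x y. G2 x (\<iota>2 y) = rl_kernel P2 e2 x y"
    using c2 unfolding rl_compactification_def by auto
  have IC: "I \<subseteq> C" using c1'(4) c2'(4) by (auto simp: I_def C_def)
  have BCI: "B = C - I" by (simp add: B_def C_def I_def)
  have R_iff: "(a, b) \<in> R \<longleftrightarrow> a \<in> C \<and> b \<in> C \<and> (a = b \<or> (a \<in> B \<and> b \<in> B \<and> (\<forall>x. F x a = F x b)))" for a b
    by (simp add: R_def prod_bdry_rel_def Let_def C_def B_def F_def)
  have eqv: "equiv C R"
    unfolding equiv_def refl_on_def sym_def trans_def
  proof (intro conjI allI impI ballI)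
    show "R \<subseteq> C \<times> C" using R_iff by auto
  qed (use R_iff in \<open>auto\<close>)
  have eqvT: "equiv (topspace ?T) R" using eqv topT by simp
  have RF: "F x a = F x b" if "(a, b) \<in> R" for a b x
  proof -
    have "a = b \<or> (\<forall>x. F x a = F x b)" using R_iff[of a b] that by blast
    then show ?thesis by blast
  qed
  have qI: "p \<in> I \<Longrightarrow> q p = {p}" for p using IC R_iff BCI by (auto simp: q_def)
  have qB: "z \<in> B \<Longrightarrow> q z \<subseteq> B" for z using R_iff by (auto simp: q_def)
  have zq: "z \<in> C \<Longrightarrow> z \<in> q z" for z using equiv_class_self[OF eqv] by (simp add: q_def)
  have topQ: "topspace Q = C // R" using qt_topspace[OF eqvT] by (simp add: Q_def C_def)
  have openQ: "openin Q U \<longleftrightarrow> U \<subseteq> C // R \<and> openin ?T (\<Union>U)" for U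
    using qt_openin[OF eqvT] by (simp add: Q_def C_def)
  have qm: "quotient_map ?T Q q" using qt_quotient_map[OF eqvT] by (simp add: Q_def q_def)
  have qC: "z \<in> C \<Longrightarrow> q z \<in> topspace Q" for z by (simp add: topQ q_def quotientI)
  have rangeI: "range \<iota> = q ` I"
  proof
    show "range \<iota> \<subseteq> q ` I" by (auto simp: \<iota>_def I_def)
    show "q ` I \<subseteq> range \<iota>"
    proof
      fix D assume "D \<in> q ` I"
      then obtain a b where "D = q (\<iota>1 a, \<iota>2 b)" by (auto simp: I_def)
      then have "D = \<iota> (a, b)" by (simp add: \<iota>_def)
      then show "D \<in> range \<iota>" by simp
    qed
  qed
  have \<iota>I: "\<iota> y = {(\<iota>1 (fst y), \<iota>2 (snd y))}" for y by (simp add: \<iota>_def qI I_def)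
  have bdry: "topspace Q - range \<iota> = q ` B"
  proof
    show "topspace Q - range \<iota> \<subseteq> q ` B"
    proof
      fix D assume D: "D \<in> topspace Q - range \<iota>"
      then obtain z where z: "D = q z" "z \<in> C" unfolding topQ by (auto simp: q_def elim: quotientE)
      have "z \<notin> I" using D z rangeI by auto
      then show "D \<in> q ` B" using z BCI by auto
    qed
    show "q ` B \<subseteq> topspace Q - range \<iota>"
    proof
      fix D assume "D \<in> q ` B"
      then obtain z where z: "D = q z" "z \<in> B" by auto
      have "z \<in> C" using z BCI by auto
      moreover have "D \<notin> range \<iota>"
      proof
        assume "D \<in> range \<iota>"
        then obtain p where p: "p \<in> I" "D = {p}" using rangeI qI by auto
        then show False using z zq[OF \<open>z \<in> C\<close>] BCI by auto
      qed
      ultimately show "D \<in> topspace Q - range \<iota>" using qC z by auto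
    qed
  qed
  define G where "G = (\<lambda>x D. F x (SOME z. z \<in> D))"
  have Gq: "z \<in> C \<Longrightarrow> G x (q z) = F x z" for x z
  proof -
    assume z: "z \<in> C"
    have "(SOME z'. z' \<in> q z) \<in> q z" using zq[OF z] by (rule someI)
    then have "(z, SOME z'. z' \<in> q z) \<in> R" by (simp add: q_def)
    then show ?thesis using RF by (simp add: G_def)
  qed
  have Fcont: "continuous_map ?T euclideanreal (F x)" for x
  proof -
    have "continuous_map ?T euclideanreal (G1 (fst x) \<circ> fst)"
      by (rule continuous_map_compose[OF continuous_map_fst c1'(7)])
    moreover have "continuous_map ?T euclideanreal (G2 (snd x) \<circ> snd)"
      by (rule continuous_map_compose[OF continuous_map_snd c2'(7)])
    ultimately have "continuous_map ?T euclideanreal (\<lambda>z. (G1 (fst x) \<circ> fst) z * (G2 (snd x) \<circ> snd) z)"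
      by (rule continuous_map_real_mult)
    then show ?thesis by (simp add: F_def o_def case_prod_unfold)
  qed
  have Gcont: "continuous_map Q euclideanreal (G x)" for x
  proof (rule continuous_compose_quotient_map[OF qm])
    show "continuous_map ?T euclideanreal (G x \<circ> q)"
      by (rule continuous_map_eq[OF Fcont[of x]]) (simp add: Gq C_def)
  qed
  have sep: "\<exists>x. G x a \<noteq> G x b" if ab: "a \<in> topspace Q - range \<iota>" "b \<in> topspace Q - range \<iota>" "a \<noteq> b" for a b
  proof -
    have "a \<in> q ` B" "b \<in> q ` B" using ab(1,2) bdry by auto
    then obtain \<xi> \<zeta> where xz: "a = q \<xi>" "b = q \<zeta>" "\<xi> \<in> B" "\<zeta> \<in> B" by blast
    then have C: "\<xi> \<in> C" "\<zeta> \<in> C" using BCI by auto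
    have "(\<xi>, \<zeta>) \<notin> R"
    proof
      assume "(\<xi>, \<zeta>) \<in> R"
      then have "q \<xi> = q \<zeta>" using equiv_class_eq_iff[OF eqv] by (simp add: q_def)
      then show False using ab xz by simp
    qed
    then obtain x where "F x \<xi> \<noteq> F x \<zeta>" using R_iff[of \<xi> \<zeta>] xz C by blast
    moreover have "G x a = F x \<xi>" "G x b = F x \<zeta>" using Gq C xz by auto
    ultimately show ?thesis by (intro exI[of _ x]) simp
  qed
  have cpt: "compact_space Q"
  proof -
    have "compact_space ?T" using c1'(1) c2'(1) by (simp add: compact_space_prod_topology)
    then have "compactin Q (q ` topspace ?T)" unfolding compact_space_def
      by (rule image_compactin[OF _ quotient_imp_continuous_map[OF qm]])
    then show ?thesis unfolding compact_space_def using quotient_imp_surjective_map[OF qm] by simp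
  qed
  have HT: "Hausdorff_space ?T" using c1'(2) c2'(2) by (simp add: Hausdorff_space_prod_topology)
  have singl: "openin Q {q p}" if p: "p \<in> I" for p
  proof -
    obtain y1 y2 where pe: "p = (\<iota>1 y1, \<iota>2 y2)" using p by (auto simp: I_def)
    have "openin ?T ({\<iota>1 y1} \<times> {\<iota>2 y2})" using c1'(5)[of y1] c2'(5)[of y2] openin_prod_Times_iff by blast
    then have "openin ?T {p}" by (simp add: pe)
    moreover have "{q p} \<subseteq> C // R" using qC[of p] p IC topQ by auto
    ultimately show ?thesis using qI[OF p] openQ by simp
  qed
  have sepI: "\<exists>U V. openin Q U \<and> openin Q V \<and> a \<in> U \<and> b \<in> V \<and> disjnt U V"
    if ab: "a \<in> range \<iota>" "b \<in> topspace Q" "a \<noteq> b" for a b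
  proof -
    obtain p where p: "p \<in> I" "a = q p" using ab(1) rangeI by auto
    have pC: "p \<in> C" using p IC by auto
    have ap: "a = {p}" using p qI by simp
    have aQ: "a \<in> C // R" using qC[OF pC] p topQ by simp
    have U: "openin Q {a}" using singl[OF p(1)] p by simp
    have eqU: "\<Union>(C // R - {a}) = C - {p}"
    proof
      show "\<Union>(C // R - {a}) \<subseteq> C - {p}"
      proof
        fix z assume "z \<in> \<Union>(C // R - {a})"
        then obtain D where D: "D \<in> C // R" "D \<noteq> a" "z \<in> D" by auto
        have "z \<in> C" using in_quotient_imp_subset[OF eqv D(1)] D(3) by auto
        moreover have "z \<noteq> p"
        proof
          assume "z = p"
          then have "D \<inter> a \<noteq> {}" using D ap by auto
          then show False using quotient_disj[OF eqv D(1) aQ] D(2) by auto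
        qed
        ultimately show "z \<in> C - {p}" by auto
      qed
      show "C - {p} \<subseteq> \<Union>(C // R - {a})"
      proof
        fix z assume z: "z \<in> C - {p}"
        have "q z \<in> C // R" using z by (simp add: q_def quotientI)
        moreover have "z \<in> q z" using zq z by auto
        moreover have "q z \<noteq> a"
        proof
          assume "q z = a"
          then have "z \<in> a" using zq[of z] z by simp
          then show False using ap z by simp
        qed
        ultimately show "z \<in> \<Union>(C // R - {a})" by blast
      qed
    qed
    have "openin ?T (C - {p})"
      using openin_diff[OF openin_topspace closedin_t1_singleton[OF Hausdorff_imp_t1_space[OF HT]]] pC
      by (simp add: C_def)
    then have V: "openin Q (topspace Q - {a})" using eqU openQ topQ by auto
    have "b \<in> topspace Q - {a}" using ab by auto
    moreover have "disjnt {a} (topspace Q - {a})" by (simp add: disjnt_def)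
    ultimately show ?thesis using U V by blast
  qed
  have opreal: "openin euclideanreal {..<m}" "openin euclideanreal {m<..}" for m :: real
    by (metis open_lessThan open_openin, metis open_greaterThan open_openin)
  have haus: "Hausdorff_space Q" unfolding Hausdorff_space_def
  proof (intro allI impI)
    fix a b assume ab: "a \<in> topspace Q \<and> b \<in> topspace Q \<and> a \<noteq> b"
    show "\<exists>U V. openin Q U \<and> openin Q V \<and> a \<in> U \<and> b \<in> V \<and> disjnt U V"
    proof (cases "a \<in> range \<iota>")
      case True then show ?thesis using sepI ab by blast
    next
      case aF: False
      show ?thesis
      proof (cases "b \<in> range \<iota>")
        case True
        then obtain U V where "openin Q U" "openin Q V" "b \<in> U" "a \<in> V" "disjnt U V" using sepI[of b a] ab by blast
        then show ?thesis by (meson disjnt_sym)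
      next
        case False
        then obtain x where x: "G x a \<noteq> G x b" using sep aF ab by blast
        define m where "m = (G x a + G x b)/2"
        let ?U = "{D \<in> topspace Q. G x D \<in> {..<m}}" and ?V = "{D \<in> topspace Q. G x D \<in> {m<..}}"
        have o: "openin Q ?U" "openin Q ?V"
          by (rule openin_continuous_map_preimage[OF Gcont opreal(1)],
              rule openin_continuous_map_preimage[OF Gcont opreal(2)])
        have d: "disjnt ?U ?V" by (auto simp: disjnt_def)
        show ?thesis
        proof (cases "G x a < G x b")
          case True
          then have "a \<in> ?U" "b \<in> ?V" using ab by (auto simp: m_def)
          then show ?thesis using o d by blast
        next
          case False
          then have "b \<in> ?U" "a \<in> ?V" using ab x by (auto simp: m_def)
          then show ?thesis using o d by (meson disjnt_sym)
        qed
      qed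
    qed
  qed
  have dense: "Q closure_of range \<iota> = topspace Q"
  proof
    show "Q closure_of range \<iota> \<subseteq> topspace Q" by (rule closure_of_subset_topspace)
    have "?T closure_of I = C" by (simp add: I_def C_def closure_of_Times c1'(6) c2'(6))
    then have "q ` C \<subseteq> Q closure_of (q ` I)"
      using continuous_map_image_closure_subset[OF quotient_imp_continuous_map[OF qm], of I] by simp
    moreover have "q ` C = topspace Q" using quotient_imp_surjective_map[OF qm] by (simp add: C_def)
    ultimately show "topspace Q \<subseteq> Q closure_of range \<iota>" using rangeI by simp
  qed
  have inj: "inj \<iota>"
  proof (rule injI)
    fix y y' assume "\<iota> y = \<iota> y'"
    then have "\<iota>1 (fst y) = \<iota>1 (fst y')" "\<iota>2 (snd y) = \<iota>2 (snd y')" by (simp_all add: \<iota>I)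
    then show "y = y'" using c1'(3) c2'(3) by (simp add: inj_eq prod_eq_iff)
  qed
  have rsub: "range \<iota> \<subseteq> topspace Q" using rangeI qC IC by auto
  have iopen: "openin Q {\<iota> x}" for x
  proof -
    have "(\<iota>1 (fst x), \<iota>2 (snd x)) \<in> I" by (simp add: I_def)
    then show ?thesis using singl by (simp add: \<iota>_def)
  qed
  have RLP: "ratio_limit_thm (prod_matrix P1 P2) (e1,e2) (\<lambda>x y. h1 (fst x) (fst y) * h2 (snd x) (snd y))"
    unfolding ratio_limit_thm_def
  proof (intro allI conjI)
    fix x :: "'a \<times> 'b" and y :: "'a \<times> 'b"
    show "0 < h1 (fst x) (fst y) * h2 (snd x) (snd y)"
      using rl1 rl2 unfolding ratio_limit_thm_def by simp
    have t1: "(\<lambda>n. mpow P1 n (fst x) (fst y) / mpow P1 n e1 e1) \<longlonglongrightarrow> h1 (fst x) (fst y)"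
      using rl1 unfolding ratio_limit_thm_def by simp
    have t2: "(\<lambda>n. mpow P2 n (snd x) (snd y) / mpow P2 n e2 e2) \<longlonglongrightarrow> h2 (snd x) (snd y)"
      using rl2 unfolding ratio_limit_thm_def by simp
    have "(\<lambda>n. mpow (prod_matrix P1 P2) n x y / mpow (prod_matrix P1 P2) n (e1, e2) (e1, e2))
        = (\<lambda>n. (mpow P1 n (fst x) (fst y) / mpow P1 n e1 e1) * (mpow P2 n (snd x) (snd y) / mpow P2 n e2 e2))"
      by (simp add: mpow_prod[OF tm1 tm2] times_divide_times_eq)
    then show "(\<lambda>n. mpow (prod_matrix P1 P2) n x y / mpow (prod_matrix P1 P2) n (e1, e2) (e1, e2))
        \<longlonglongrightarrow> h1 (fst x) (fst y) * h2 (snd x) (snd y)"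
      using tendsto_mult[OF t1 t2] by simp
  qed
  have kern: "G x (\<iota> y) = rl_kernel (prod_matrix P1 P2) (e1, e2) x y" for x y
  proof -
    have "(\<iota>1 (fst y), \<iota>2 (snd y)) \<in> C" using IC by (auto simp: I_def)
    then have "G x (\<iota> y) = F x (\<iota>1 (fst y), \<iota>2 (snd y))"
      unfolding \<iota>_def by (rule Gq)
    also have "\<dots> = rl_kernel P1 e1 (fst x) (fst y) * rl_kernel P2 e2 (snd x) (snd y)"
      by (simp add: F_def c1'(8) c2'(8))
    also have "\<dots> = rl_kernel (prod_matrix P1 P2) (e1, e2) x y"
      by (simp add: rl_kernel_eq[OF rl1] rl_kernel_eq[OF rl2] rl_kernel_eq[OF RLP] times_divide_times_eq)
    finally show ?thesis .
  qed
  have "rl_compactification (prod_matrix P1 P2) (e1,e2) Q \<iota> G"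
    unfolding rl_compactification_def
    using cpt haus inj rsub iopen dense Gcont kern sep by blast
  moreover have "\<forall>x \<xi>. \<xi> \<in> B \<longrightarrow> G x (q \<xi>) = G1 (fst x) (fst \<xi>) * G2 (snd x) (snd \<xi>)"
    using Gq BCI by (auto simp: F_def)
  ultimately show ?thesis using RLP bdry by blast
qed
theorem lemma5p1:
  fixes P1 :: "'a::countable \<Rightarrow> 'a \<Rightarrow> real" and e1 :: 'a and h1 :: "'a \<Rightarrow> 'a \<Rightarrow> real"
    and P2 :: "'b::countable \<Rightarrow> 'b \<Rightarrow> real" and e2 :: 'b and h2 :: "'b \<Rightarrow> 'b \<Rightarrow> real"
    and T1 :: "'s topology" and \<iota>1 :: "'a \<Rightarrow> 's" and G1 :: "'a \<Rightarrow> 's \<Rightarrow> real"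
    and T2 :: "'t topology" and \<iota>2 :: "'b \<Rightarrow> 't" and G2 :: "'b \<Rightarrow> 't \<Rightarrow> real"
  assumes "transition_matrix P1" "irreducible_mc P1" "aperiodic_mc P1 e1" "ratio_limit_thm P1 e1 h1"
    and "transition_matrix P2" "irreducible_mc P2" "aperiodic_mc P2 e2" "ratio_limit_thm P2 e2 h2"
    and "rl_compactification P1 e1 T1 \<iota>1 G1"
    and "rl_compactification P2 e2 T2 \<iota>2 G2"
  shows "let P = prod_matrix P1 P2; e = (e1, e2);
             R = prod_bdry_rel T1 T2 \<iota>1 \<iota>2 G1 G2;
             Q = quotient_topology (prod_topology T1 T2) R;
             q = (\<lambda>z. R `` {z});
             \<iota> = (\<lambda>x. q (\<iota>1 (fst x), \<iota>2 (snd x)));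
             B = topspace T1 \<times> topspace T2 - (range \<iota>1 \<times> range \<iota>2)
         in ratio_limit_thm P e (\<lambda>x y. h1 (fst x) (fst y) * h2 (snd x) (snd y)) \<and>
            topspace Q - range \<iota> = q ` B \<and>
            (\<exists>G. rl_compactification P e Q \<iota> G \<and>
                 (\<forall>x \<xi>. \<xi> \<in> B \<longrightarrow> G x (q \<xi>) = G1 (fst x) (fst \<xi>) * G2 (snd x) (snd \<xi>)))"
    unfolding Let_def by (rule main[OF assms(1,4,5,8,9,10) refl refl refl refl refl])

end
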